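(* Let $G$ be a finite simple graph with a perfect matching $M$, and let $\mathcal{C}$ be an optimal edge $2$-colouring of $G$. For an edge $e$ write $\mathrm{cl}(e)$ for its colour, and for a vertex $u$ write $\mathrm{mcl}(u)$ for the colour of the unique edge of $M$ incident with $u$. Let $u_0u_1\cdots u_k$ ($k\ge 1$) be a path in $G\setminus M$ such that $\mathrm{mcl}(u_0)=\mathrm{cl}(u_0u_1)$ and $\mathrm{mcl}(u_k)=\mathrm{cl}(u_{k-1}u_k)$. Then there exist indices $0\le i<j\le k$ such that $\mathrm{mcl}(u_i)=\mathrm{mcl}(u_j)$.
   Context: $G\setminus M$ is the spanning subgraph of $G$ with edge set $E(G)\setminus M$. An edge $2$-colouring is an assignment of colours to edges (not necessarily proper) such that at each vertex the incident edges carry at most $2$ distinct colours; it is optimal if it uses the maximum possible number of colours. *)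

theory Defs
  imports Main
begin

definition simple_graph :: "'a set \<Rightarrow> 'a set set \<Rightarrow> bool" where
  "simple_graph V E \<longleftrightarrow> finite V \<and> (\<forall>e\<in>E. e \<subseteq> V \<and> card e = 2)"

definition perfect_matching :: "'a set \<Rightarrow> 'a set set \<Rightarrow> 'a set set \<Rightarrow> bool" where
  "perfect_matching V E M \<longleftrightarrow> M \<subseteq> E \<and> (\<forall>v\<in>V. \<exists>!e. e \<in> M \<and> v \<in> e)"

definition edge_2_colouring :: "'a set \<Rightarrow> 'a set set \<Rightarrow> ('a set \<Rightarrow> nat) \<Rightarrow> bool" where
  "edge_2_colouring V E c \<longleftrightarrow> (\<forall>v\<in>V. card (c ` {e\<in>E. v \<in> e}) \<le> 2)"

definition num_colours :: "'a set set \<Rightarrow> ('a set \<Rightarrow> nat) \<Rightarrow> nat" where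
  "num_colours E c = card (c ` E)"

definition optimal_edge_2_colouring :: "'a set \<Rightarrow> 'a set set \<Rightarrow> ('a set \<Rightarrow> nat) \<Rightarrow> bool" where
  "optimal_edge_2_colouring V E c \<longleftrightarrow> edge_2_colouring V E c \<and>
     (\<forall>c'. edge_2_colouring V E c' \<longrightarrow> num_colours E c' \<le> num_colours E c)"

definition mcl :: "'a set set \<Rightarrow> ('a set \<Rightarrow> nat) \<Rightarrow> 'a \<Rightarrow> nat" where
  "mcl M c u = c (THE e. e \<in> M \<and> u \<in> e)"

definition is_path :: "'a set set \<Rightarrow> 'a list \<Rightarrow> bool" where
  "is_path E' us \<longleftrightarrow> us \<noteq> [] \<and> distinct us \<and>
     (\<forall>i. Suc i < length us \<longrightarrow> {us ! i, us ! Suc i} \<in> E')"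

end

theory Submission
  imports Defs
begin

lemma three_col:
  assumes "simple_graph V E" "edge_2_colouring V E c" "v \<in> V"
    "e1 \<in> E" "e2 \<in> E" "e3 \<in> E" "v \<in> e1" "v \<in> e2" "v \<in> e3" "c e1 \<noteq> c e2"
  shows "c e3 = c e1 \<or> c e3 = c e2"
proof (rule ccontr)
  assume n: "\<not> (c e3 = c e1 \<or> c e3 = c e2)"
  have "E \<subseteq> Pow V" using assms(1) unfolding simple_graph_def by auto
  moreover have "finite V" using assms(1) unfolding simple_graph_def by auto
  ultimately have fE: "finite E" by (meson finite_Pow_iff finite_subset)
  have sub: "{c e1, c e2, c e3} \<subseteq> c ` {e\<in>E. v \<in> e}" using assms by auto
  have "card {c e1, c e2, c e3} = 3" using n assms(10) by auto
  moreover have "card {c e1, c e2, c e3} \<le> card (c ` {e\<in>E. v \<in> e})"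
    using sub fE by (intro card_mono) auto
  moreover have "card (c ` {e\<in>E. v \<in> e}) \<le> 2" using assms(2,3) unfolding edge_2_colouring_def by auto
  ultimately show False by simp
qed

lemma mcl_edge:
  assumes "perfect_matching V E M" "v \<in> V"
  shows "(THE e. e \<in> M \<and> v \<in> e) \<in> E \<and> v \<in> (THE e. e \<in> M \<and> v \<in> e)"
proof -
  have "\<exists>!e. e \<in> M \<and> v \<in> e" using assms unfolding perfect_matching_def by auto
  from theI'[OF this] show ?thesis using assms unfolding perfect_matching_def by auto
qed

theorem lemma1:
  fixes V :: "'a set" and E M :: "'a set set" and c :: "'a set \<Rightarrow> nat"
    and us :: "'a list" and k :: nat
  assumes "simple_graph V E"
    and "perfect_matching V E M"
    and "optimal_edge_2_colouring V E c"
    and "is_path (E - M) us"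
    and "length us = k + 1" and "k \<ge> 1"
    and "mcl M c (us ! 0) = c {us ! 0, us ! 1}"
    and "mcl M c (us ! k) = c {us ! (k - 1), us ! k}"
  shows "\<exists>i j. i < j \<and> j \<le> k \<and> mcl M c (us ! i) = mcl M c (us ! j)"
proof (rule ccontr)
  assume H0: "\<not> ?thesis"
  have H: "mcl M c (us ! a) \<noteq> mcl M c (us ! b)" if "a < b" "b \<le> k" for a b
    using H0 that by blast
  have col: "edge_2_colouring V E c" using assms(3) unfolding optimal_edge_2_colouring_def by auto
  have edge: "{us ! i, us ! Suc i} \<in> E" if "i < k" for i
    using assms(4,5) that unfolding is_path_def by auto
  have inV: "us ! Suc i \<in> V" if "i < k" for i
  proof -
    have "{us ! i, us ! Suc i} \<subseteq> V" using edge[OF that] assms(1) unfolding simple_graph_def by auto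
    then show ?thesis by simp
  qed
  have claim: "\<exists>j\<le>i. c {us ! i, us ! Suc i} = mcl M c (us ! j)" if "i < k" for i
    using that
  proof (induction i)
    case 0
    then show ?case using assms(7) by auto
  next
    case (Suc i)
    then obtain j where j: "j \<le> i" "c {us ! i, us ! Suc i} = mcl M c (us ! j)" by auto
    let ?m = "THE e. e \<in> M \<and> us ! Suc i \<in> e"
    have m: "?m \<in> E" "us ! Suc i \<in> ?m" using mcl_edge[OF assms(2) inV[of i]] Suc.prems by auto
    have ne: "c {us ! i, us ! Suc i} \<noteq> c ?m"
    proof -
      have "mcl M c (us ! j) \<noteq> mcl M c (us ! Suc i)" using H[of j "Suc i"] j(1) Suc.prems by simp
      then show ?thesis using j(2) unfolding mcl_def by simp
    qed
    have "c {us ! Suc i, us ! Suc (Suc i)} = c {us ! i, us ! Suc i} \<or>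
          c {us ! Suc i, us ! Suc (Suc i)} = c ?m"
      by (rule three_col[OF assms(1) col inV[of i] edge[of i] m(1) edge[of "Suc i"]])
         (use Suc.prems m ne in auto)
    then show ?case
    proof
      assume "c {us ! Suc i, us ! Suc (Suc i)} = c {us ! i, us ! Suc i}"
      then show ?case using j by (intro exI[of _ j]) simp
    next
      assume "c {us ! Suc i, us ! Suc (Suc i)} = c ?m"
      then show ?case unfolding mcl_def by (intro exI[of _ "Suc i"]) simp
    qed
  qed
  obtain j where "j \<le> k - 1" "c {us ! (k-1), us ! Suc (k-1)} = mcl M c (us ! j)"
    using claim[of "k-1"] assms(6) by auto
  moreover have "Suc (k-1) = k" using assms(6) by simp
  ultimately have "mcl M c (us ! j) = mcl M c (us ! k)" using assms(8) by simp
  moreover have "j < k" using \<open>j \<le> k - 1\<close> assms(6) by simp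
  ultimately show False using H[of j k] by simp
qed

end
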